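(* Let $A\in GL_n(\mathbb{C})$ with $M_1(A)\in(\frac12,1)$ and let $c\in(M_1(A),1)$. Then $M_1(A_m)<f^{m-1}(c)$ for every $m\geqslant1$.
   Context: For $B\in GL_N(\mathbb{C})$, $M_1(B)$ denotes $\frac1N$ times the algebraic multiplicity of $1$ as an eigenvalue of $B$. Define $A_1=A$ and $A_{m+1}=A_m\otimes A_m$ (Kronecker product), so $A_m\in GL_{n^{2^{m-1}}}(\mathbb{C})$. Let $f:[\frac12,1]\to[\frac12,1]$, $f(x)=x^2+(1-x)^2$, and $f^{m}$ its $m$-fold iterate ($f^0=\mathrm{id}$). *)

theory Defs
  imports "Jordan_Normal_Form.Jordan_Normal_Form"
begin

definition kron_mat :: "'a :: times mat \<Rightarrow> 'a mat \<Rightarrow> 'a mat" where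
  "kron_mat A B = mat (dim_row A * dim_row B) (dim_col A * dim_col B)
     (\<lambda>(i, j). A $$ (i div dim_row B, j div dim_col B) * B $$ (i mod dim_row B, j mod dim_col B))"

text \<open>kron_iter A k is A_(k+1): kron_iter A 0 = A_1 = A, A_(m+1) = A_m (x) A_m.\<close>
primrec kron_iter :: "'a :: times mat \<Rightarrow> nat \<Rightarrow> 'a mat" where
  "kron_iter A 0 = A"
| "kron_iter A (Suc k) = kron_mat (kron_iter A k) (kron_iter A k)"

definition M1 :: "complex mat \<Rightarrow> real" where
  "M1 B = real (order 1 (char_poly B)) / real (dim_row B)"

definition fmap :: "real \<Rightarrow> real" where
  "fmap x = x^2 + (1 - x)^2"

end

theory Submission
  imports Defs "Jordan_Normal_Form.Schur_Decomposition"
begin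


lemma kron_carrier: "kron_mat A B \<in> carrier_mat (dim_row A * dim_row B) (dim_col A * dim_col B)"
  unfolding kron_mat_def by auto

lemma kron_dims[simp]: "dim_row (kron_mat A B) = dim_row A * dim_row B"
  "dim_col (kron_mat A B) = dim_col A * dim_col B"
  unfolding kron_mat_def by auto

lemma kron_index[simp]: "i < dim_row A * dim_row B \<Longrightarrow> j < dim_col A * dim_col B \<Longrightarrow>
  kron_mat A B $$ (i,j) = A $$ (i div dim_row B, j div dim_col B) * B $$ (i mod dim_row B, j mod dim_col B)"
  unfolding kron_mat_def by auto

lemma bij_divmod: "bij_betw (\<lambda>t. (t div b, t mod (b::nat))) {..<a*b} ({..<a} \<times> {..<b})"
proof (rule bij_betw_imageI)
  show "inj_on (\<lambda>t. (t div b, t mod b)) {..<a * b}"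
    by (rule inj_onI) (metis div_mult_mod_eq prod.inject)
  show "(\<lambda>t. (t div b, t mod b)) ` {..<a * b} = {..<a} \<times> {..<b}"
  proof
    show "(\<lambda>t. (t div b, t mod b)) ` {..<a * b} \<subseteq> {..<a} \<times> {..<b}"
      by (auto simp: less_mult_imp_div_less) (metis mult_zero_right not_less_zero mod_less_divisor neq0_conv)
    show "{..<a} \<times> {..<b} \<subseteq> (\<lambda>t. (t div b, t mod b)) ` {..<a * b}"
    proof
      fix p assume "p \<in> {..<a} \<times> {..<b}"
      then obtain x y where p: "p = (x,y)" "x < a" "y < b" by auto
      have "x*b+y < (x+1)*b" using p by simp
      also have "(x+1)*b \<le> a*b" using p by (intro mult_le_mono1) simp
      finally have "x * b + y < a * b" .
      moreover have "((x*b+y) div b, (x*b+y) mod b) = p" using p by auto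
      ultimately show "p \<in> (\<lambda>t. (t div b, t mod b)) ` {..<a * b}" by force
    qed
  qed
qed

lemma sum_divmod: "(\<Sum>t<a*b. f t) = (\<Sum>x<a. \<Sum>y<(b::nat). f (x*b+y))"
proof -
  have "(\<Sum>t<a*b. f t) = (\<Sum>p\<in>{..<a}\<times>{..<b}. f (fst p * b + snd p))"
  proof -
    have "(\<Sum>t<a*b. f t) = (\<Sum>t<a*b. (\<lambda>p. f (fst p * b + snd p)) (t div b, t mod b))" by simp
    also have "\<dots> = (\<Sum>p\<in>{..<a}\<times>{..<b}. f (fst p * b + snd p))"
      by (rule sum.reindex_bij_betw[OF bij_divmod])
    finally show ?thesis .
  qed
  also have "\<dots> = (\<Sum>x<a. \<Sum>y<b. f (x*b+y))" by (simp add: sum.cartesian_product case_prod_beta)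
  finally show ?thesis .
qed

lemma kron_mult:
  assumes A: "(A :: 'a :: comm_semiring_0 mat) \<in> carrier_mat n1 k1" and B: "B \<in> carrier_mat n2 k2"
    and C: "C \<in> carrier_mat k1 m1" and D: "D \<in> carrier_mat k2 m2"
  shows "kron_mat A B * kron_mat C D = kron_mat (A * C) (B * D)"
proof (rule eq_matI)
  fix i j assume i: "i < dim_row (kron_mat (A * C) (B * D))" and j: "j < dim_col (kron_mat (A * C) (B * D))"
  have i': "i < n1 * n2" and j': "j < m1 * m2" using i j A B C D by auto
  have n2: "n2 > 0" using i' by (cases n2) auto
  have m2: "m2 > 0" using j' by (cases m2) auto
  have id: "i div n2 < n1" "i mod n2 < n2" "j div m2 < m1" "j mod m2 < m2"
    using i' j' n2 m2 by (auto simp: less_mult_imp_div_less)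
  have "(kron_mat A B * kron_mat C D) $$ (i,j) = (\<Sum>t<k1*k2. kron_mat A B $$ (i,t) * kron_mat C D $$ (t,j))"
    using A B C D i' j' by (simp add: scalar_prod_def lessThan_atLeast0)
  also have "\<dots> = (\<Sum>x<k1. \<Sum>y<k2. kron_mat A B $$ (i,x*k2+y) * kron_mat C D $$ (x*k2+y,j))"
    by (rule sum_divmod)
  also have "\<dots> = (\<Sum>x<k1. \<Sum>y<k2. (A $$ (i div n2, x) * C $$ (x, j div m2)) * (B $$ (i mod n2, y) * D $$ (y, j mod m2)))"
  proof (intro sum.cong refl)
    fix x y assume x: "x \<in> {..<k1}" and y: "y \<in> {..<k2}"
    have "x*k2+y < (x+1)*k2" using y by simp
    also have "(x+1)*k2 \<le> k1*k2" using x by (intro mult_le_mono1) simp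
    finally have t: "x*k2+y < k1*k2" .
    have dm: "(x*k2+y) div k2 = x" "(x*k2+y) mod k2 = y" using y by auto
    show "kron_mat A B $$ (i,x*k2+y) * kron_mat C D $$ (x*k2+y,j) = (A $$ (i div n2, x) * C $$ (x, j div m2)) * (B $$ (i mod n2, y) * D $$ (y, j mod m2))"
      using A B C D i' j' t y by (simp add: dm mult_ac)
  qed
  also have "\<dots> = (A*C) $$ (i div n2, j div m2) * (B*D) $$ (i mod n2, j mod m2)"
    using A B C D id by (simp add: scalar_prod_def lessThan_atLeast0 sum_product)
  also have "\<dots> = kron_mat (A * C) (B * D) $$ (i,j)" using A B C D i' j' by simp
  finally show "(kron_mat A B * kron_mat C D) $$ (i, j) = kron_mat (A * C) (B * D) $$ (i, j)" .
qed (use A B C D in auto)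


lemma kron_one: "kron_mat (1\<^sub>m a) (1\<^sub>m b) = (1\<^sub>m (a*b) :: 'a :: semiring_1 mat)"
proof (rule eq_matI)
  fix i j assume "i < dim_row (1\<^sub>m (a * b))" "j < dim_col (1\<^sub>m (a * b))"
  hence i: "i < a*b" and j: "j < a*b" by auto
  have b: "b > 0" using i by (cases b) auto
  have "(i div b = j div b \<and> i mod b = j mod b) = (i = j)" by (metis div_mult_mod_eq)
  thus "kron_mat (1\<^sub>m a) (1\<^sub>m b) $$ (i, j) = (1\<^sub>m (a * b) $$ (i, j) :: 'a)"
    using i j b by (cases "i = j") (auto simp: less_mult_imp_div_less)
qed auto



lemma order_linear_prod: "Polynomial.order (a::'a::idom) (\<Prod>x\<leftarrow>xs. [:-x, 1:]) = length (filter ((=) a) xs)"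
proof (induct xs)
  case (Cons b xs)
  have h1: "[:-b,1:] \<noteq> (0::'a poly)" by simp
  have h2: "(\<Prod>x\<leftarrow>xs. [:-x, 1:]) \<noteq> (0::'a poly)" unfolding prod_list_zero_iff by auto
  have nz: "[:-b,1:] * (\<Prod>x\<leftarrow>xs. [:-x, 1:]) \<noteq> 0"
    using h1 h2 mult_eq_0_iff by blast
  have "Polynomial.order a (\<Prod>x\<leftarrow>b#xs. [:-x, 1:]) = Polynomial.order a [:-b,1:] + Polynomial.order a (\<Prod>x\<leftarrow>xs. [:-x, 1:])"
    using order_mult[OF nz] by simp
  moreover have "Polynomial.order a [:-b,1:] = (if a = b then 1 else 0)"
  proof (cases "a = b")
    case True then show ?thesis using order_power_n_n[of a 1] by simp
  next
    case False
    have "Polynomial.order a [:-b,1:] = 0" by (rule order_0I) (use False in simp)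
    with False show ?thesis by simp
  qed
  ultimately show ?case using Cons by simp
qed simp

lemma length_filter_upt: "length (filter P [0..<n]) = card {i. i < n \<and> P i}"
proof -
  have "length (filter P [0..<n]) = card (set (filter P [0..<n]))"
    by (rule distinct_card[symmetric]) simp
  also have "set (filter P [0..<n]) = {i. i<n \<and> P i}" by auto
  finally show ?thesis .
qed

lemma kron_similar:
  assumes "similar_mat A T" "A \<in> carrier_mat n n" "T \<in> carrier_mat n n"
  shows "similar_mat (kron_mat A A) (kron_mat T (T :: 'a :: comm_ring_1 mat))"
proof -
  from similar_matD[OF assms(1)] obtain m P Q where
    c: "{A,T,P,Q} \<subseteq> carrier_mat m m" and PQ: "P * Q = 1\<^sub>m m" and QP: "Q * P = 1\<^sub>m m" and A: "A = P * T * Q"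
    by blast
  have P: "P \<in> carrier_mat m m" and Q: "Q \<in> carrier_mat m m" and T: "T \<in> carrier_mat m m" using c by auto
  have PT: "P * T \<in> carrier_mat m m" using P T by auto
  show ?thesis
  proof (rule similar_matI[where P = "kron_mat P P" and Q = "kron_mat Q Q" and n = "m*m"])
    show "{kron_mat A A, kron_mat T T, kron_mat P P, kron_mat Q Q} \<subseteq> carrier_mat (m * m) (m * m)"
      using c by auto
    show "kron_mat P P * kron_mat Q Q = 1\<^sub>m (m * m)"
      by (simp add: kron_mult[OF P P Q Q] PQ kron_one)
    show "kron_mat Q Q * kron_mat P P = 1\<^sub>m (m * m)"
      by (simp add: kron_mult[OF Q Q P P] QP kron_one)
    show "kron_mat A A = kron_mat P P * kron_mat T T * kron_mat Q Q"
      by (simp add: kron_mult[OF P P T T] kron_mult[OF PT PT Q Q] A)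
  qed
qed

lemma kron_upper:
  assumes "upper_triangular T" "T \<in> carrier_mat n n"
  shows "upper_triangular (kron_mat T (T::'a::semiring_0 mat))"
  unfolding upper_triangular_def
proof (intro allI impI)
  fix i j assume i: "i < dim_row (kron_mat T T)" and ji: "j < i"
  hence i': "i < n*n" and j': "j < n*n" using assms by auto
  have n: "n > 0" using i' by (cases n) auto
  have "i div n > j div n \<or> (i div n = j div n \<and> i mod n > j mod n)"
  proof (rule ccontr)
    assume "\<not> ?thesis"
    hence "i div n < j div n \<or> (i div n = j div n \<and> i mod n \<le> j mod n)" by auto
    hence "i \<le> j"
    proof
      assume "i div n < j div n" thus "i \<le> j" by (meson div_le_mono less_le_not_le nat_le_linear)
    next
      assume "i div n = j div n \<and> i mod n \<le> j mod n"
      thus "i \<le> j" by (metis add_le_cancel_left div_mult_mod_eq)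
    qed
    thus False using ji by simp
  qed
  moreover have "i div n < n" "j div n < n" "i mod n < n" "j mod n < n"
    using i' j' n by (auto simp: less_mult_imp_div_less)
  ultimately show "kron_mat T T $$ (i, j) = 0"
    using assms i' j' unfolding upper_triangular_def by auto
qed

lemma kron_iter_carrier: "A \<in> carrier_mat n n \<Longrightarrow> kron_iter A k \<in> carrier_mat (n^(2^k)) (n^(2^k))"
proof (induct k)
  case (Suc k)
  have "n^(2^Suc k) = n^(2^k) * n^(2^k)" by (simp add: power_add[symmetric] mult_2)
  with Suc show ?case using kron_carrier[of "kron_iter A k" "kron_iter A k"] by auto
qed simp



lemma card_pairs:
  assumes "finite I"
  shows "card {p\<in>I\<times>I. d (fst p) = (F (snd p) :: 'b)} = (\<Sum>k\<in>I. card {i\<in>I. d i = F k})"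
proof -
  have "card {p\<in>I\<times>I. d (fst p) = F (snd p)} = (\<Sum>p\<in>{p\<in>I\<times>I. d (fst p) = F (snd p)}. 1)"
    by simp
  also have "\<dots> = (\<Sum>p\<in>I\<times>I. if d (fst p) = F (snd p) then 1 else 0)"
    by (rule sum.inter_filter) (simp add: assms)
  also have "\<dots> = (\<Sum>i\<in>I. \<Sum>k\<in>I. if d i = F k then 1 else 0)"
    by (simp add: sum.cartesian_product case_prod_beta)
  also have "\<dots> = (\<Sum>k\<in>I. \<Sum>i\<in>I. if d i = F k then 1 else 0)"
    by (rule sum.swap)
  also have "\<dots> = (\<Sum>k\<in>I. card {i\<in>I. d i = F k})"
    using assms by (simp add: sum.inter_filter[symmetric])
  finally show ?thesis .
qed

lemma sum_group:
  assumes "finite I"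
  shows "(\<Sum>k\<in>I. (g (d k) :: real)) = (\<Sum>w\<in>d`I. real (card {i\<in>I. d i = w}) * g w)"
proof -
  have "(\<Sum>k\<in>I. g (d k)) = (\<Sum>w\<in>d`I. \<Sum>k\<in>{k\<in>I. d k = w}. g (d k))"
    using assms by (rule sum.image_gen)
  also have "\<dots> = (\<Sum>w\<in>d`I. real (card {i\<in>I. d i = w}) * g w)"
  proof (rule sum.cong[OF refl])
    fix w assume "w \<in> d ` I"
    have "(\<Sum>k\<in>{k\<in>I. d k = w}. g (d k)) = (\<Sum>k\<in>{k\<in>I. d k = w}. g w)"
      by (rule sum.cong) auto
    thus "(\<Sum>k\<in>{k\<in>I. d k = w}. g (d k)) = real (card {i\<in>I. d i = w}) * g w" by simp
  qed
  finally show ?thesis .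
qed

lemma CS_count:
  assumes I: "finite I" and h: "inj h"
  shows "card {p\<in>I\<times>I. d (fst p) = h (d (snd p))} \<le> card {p\<in>I\<times>I. d (fst p) = d (snd p)}"
proof -
  define c where "c w = real (card {i\<in>I. d i = w})" for w
  define V where "V = d ` I"
  have V: "finite V" using I by (simp add: V_def)
  have c0: "c u = 0" if "u \<notin> V" for u
  proof -
    have "{i\<in>I. d i = u} = {}" using that unfolding V_def by auto
    thus ?thesis unfolding c_def by (simp only: card.empty of_nat_0)
  qed
  have "real (card {p\<in>I\<times>I. d (fst p) = h (d (snd p))}) = (\<Sum>k\<in>I. c (h (d k)))"
    using card_pairs[OF I, where d=d and F="\<lambda>k. h (d k)"] unfolding c_def by simp
  also have "\<dots> = (\<Sum>w\<in>V. c w * c (h w))"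
    using sum_group[OF I, where g="\<lambda>w. c (h w)" and d=d] unfolding V_def c_def by simp
  also have "\<dots> \<le> (\<Sum>w\<in>V. (c w ^ 2 + c (h w) ^ 2) / 2)"
  proof (rule sum_mono)
    fix w show "c w * c (h w) \<le> (c w ^ 2 + c (h w) ^ 2) / 2"
      using sum_squares_bound[of "c w" "c (h w)"] by (simp add: power2_eq_square)
  qed
  also have "\<dots> = ((\<Sum>w\<in>V. c w ^ 2) + (\<Sum>w\<in>V. c (h w) ^ 2)) / 2"
    by (simp only: sum_divide_distrib[symmetric] sum.distrib)
  also have "(\<Sum>w\<in>V. c (h w) ^ 2) \<le> (\<Sum>w\<in>V. c w ^ 2)"
  proof -
    have "(\<Sum>w\<in>V. c (h w) ^ 2) = (\<Sum>u\<in>h`V. c u ^ 2)"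
      using sum.reindex[of h V "\<lambda>u. c u ^ 2"] h by (simp add: inj_on_def inj_def)
    also have "\<dots> \<le> (\<Sum>u\<in>V \<union> h`V. c u ^ 2)"
      by (rule sum_mono2) (use V in auto)
    also have "\<dots> = (\<Sum>u\<in>V. c u ^ 2)"
      by (rule sum.mono_neutral_right) (use V c0 in auto)
    finally show ?thesis .
  qed
  hence "((\<Sum>w\<in>V. c w ^ 2) + (\<Sum>w\<in>V. c (h w) ^ 2)) / 2 \<le> (\<Sum>w\<in>V. c w * c w)"
    by (simp add: power2_eq_square)
  also have "\<dots> = (\<Sum>k\<in>I. c (d k))"
    using sum_group[OF I, where g="\<lambda>w. c w" and d=d] unfolding V_def c_def by simp
  also have "\<dots> = real (card {p\<in>I\<times>I. d (fst p) = d (snd p)})"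
    using card_pairs[OF I, where d=d and F=d] unfolding c_def by simp
  finally show ?thesis by linarith
qed

lemma mode_bound:
  assumes X: "finite X"
    and B: "\<And>v. v \<noteq> 1 \<Longrightarrow> card {x\<in>X. r x = v} \<le> B"
  shows "real (card {p\<in>X\<times>X. r (fst p) = r (snd p)}) \<le>
    real (card {x\<in>X. r x = 1}) ^ 2 + (real (card X) - real (card {x\<in>X. r x = 1})) *
      min (real B) (real (card X) - real (card {x\<in>X. r x = 1}))"
proof -
  define u where "u = card {x\<in>X. r x = 1}"
  define M where "M = card X"
  define c where "c x = card {y\<in>X. r y = r x}" for x
  have uM: "u \<le> M" unfolding u_def M_def by (rule card_mono[OF X]) auto
  have "card {p\<in>X\<times>X. r (fst p) = r (snd p)} = (\<Sum>x\<in>X. c x)"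
    using card_pairs[OF X, where d=r and F=r] unfolding c_def by simp
  also have "\<dots> = (\<Sum>x\<in>{x\<in>X. r x = 1}. c x) + (\<Sum>x\<in>{x\<in>X. r x \<noteq> 1}. c x)"
  proof -
    have "X = {x\<in>X. r x = 1} \<union> {x\<in>X. r x \<noteq> 1}" by auto
    hence "(\<Sum>x\<in>X. c x) = (\<Sum>x\<in>{x\<in>X. r x = 1} \<union> {x\<in>X. r x \<noteq> 1}. c x)" by simp
    also have "\<dots> = (\<Sum>x\<in>{x\<in>X. r x = 1}. c x) + (\<Sum>x\<in>{x\<in>X. r x \<noteq> 1}. c x)"
      by (rule sum.union_disjoint) (use X in auto)
    finally show ?thesis .
  qed
  finally have eq: "real (card {p\<in>X\<times>X. r (fst p) = r (snd p)}) =
     (\<Sum>x\<in>{x\<in>X. r x = 1}. real (c x)) + (\<Sum>x\<in>{x\<in>X. r x \<noteq> 1}. real (c x))" by simp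
  have s1: "(\<Sum>x\<in>{x\<in>X. r x = 1}. real (c x)) = real u * real u"
  proof -
    have "(\<Sum>x\<in>{x\<in>X. r x = 1}. real (c x)) = (\<Sum>x\<in>{x\<in>X. r x = 1}. real u)"
      by (rule sum.cong) (auto simp: c_def u_def)
    thus ?thesis by (simp add: u_def)
  qed
  have cardc: "card {x\<in>X. r x \<noteq> 1} = M - u"
  proof -
    have "{x\<in>X. r x \<noteq> 1} = X - {x\<in>X. r x = 1}" by auto
    thus ?thesis unfolding M_def u_def using X by (simp add: card_Diff_subset)
  qed
  have s2: "(\<Sum>x\<in>{x\<in>X. r x \<noteq> 1}. real (c x)) \<le> (\<Sum>x\<in>{x\<in>X. r x \<noteq> 1}. min (real B) (real M - real u))"
  proof (rule sum_mono)
    fix x assume x: "x \<in> {x\<in>X. r x \<noteq> 1}"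
    have "c x \<le> B" unfolding c_def using B x by auto
    moreover have "c x \<le> M - u"
    proof -
      have "{y\<in>X. r y = r x} \<subseteq> {x\<in>X. r x \<noteq> 1}" using x by auto
      hence "c x \<le> card {x\<in>X. r x \<noteq> 1}" unfolding c_def by (rule card_mono[rotated]) (use X in simp)
      thus ?thesis using cardc by simp
    qed
    ultimately show "real (c x) \<le> min (real B) (real M - real u)" using uM by auto
  qed
  also have "\<dots> = (real M - real u) * min (real B) (real M - real u)"
    using cardc uM by (simp add: of_nat_diff)
  finally show ?thesis using eq s1 unfolding u_def[symmetric] M_def[symmetric]
    by (simp add: power2_eq_square)
qed



definition coll :: "nat \<Rightarrow> (nat \<Rightarrow> complex) \<Rightarrow> nat" where
  "coll N d = card {p\<in>{..<N}\<times>{..<N}. d (fst p) = d (snd p)}"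
definition ones :: "nat \<Rightarrow> (nat \<Rightarrow> complex) \<Rightarrow> nat" where
  "ones N d = card {i\<in>{..<N}. d i = 1}"

lemma card_bij:
  assumes "bij_betw f A B"
  shows "card {x\<in>A. P (f x)} = card {y\<in>B. P y}"
proof -
  have "f ` {x\<in>A. P (f x)} = {y\<in>B. P y}" using assms unfolding bij_betw_def by auto
  moreover have "inj_on f {x\<in>A. P (f x)}" using assms unfolding bij_betw_def by (auto intro: inj_on_subset)
  ultimately show ?thesis using card_image by metis
qed

lemma kron_ones:
  assumes nz: "\<And>i. i < N \<Longrightarrow> d i \<noteq> 0"
  shows "ones (N*N) (\<lambda>i. d (i div N) * d (i mod N)) \<le> coll N d"
proof -
  let ?I = "{..<N}"
  have "ones (N*N) (\<lambda>i. d (i div N) * d (i mod N)) = card {p\<in>?I\<times>?I. d (fst p) * d (snd p) = 1}"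
    unfolding ones_def using card_bij[OF bij_divmod[of N N], where P = "\<lambda>p. d (fst p) * d (snd p) = 1"]
    by simp
  also have "{p\<in>?I\<times>?I. d (fst p) * d (snd p) = 1} = {p\<in>?I\<times>?I. d (fst p) = inverse (d (snd p))}"
    using nz by (auto simp: field_simps)
  also have "card \<dots> \<le> coll N d" unfolding coll_def
    by (rule CS_count) (auto intro: inj_on_inverseI[where g = inverse])
  finally show ?thesis .
qed

lemma kron_coll:
  assumes nz: "\<And>i. i < N \<Longrightarrow> d i \<noteq> 0"
  shows "real (coll (N*N) (\<lambda>i. d (i div N) * d (i mod N))) \<le>
     real (coll N d) ^ 2 + (real (N*N) - real (coll N d)) * min (real (coll N d)) (real (N*N) - real (coll N d))"
proof -
  let ?I = "{..<N}"
  let ?J = "?I \<times> ?I"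
  define r where "r p = d (fst p) / d (snd p)" for p
  have "coll (N*N) (\<lambda>i. d (i div N) * d (i mod N)) =
    card {q\<in>?J\<times>?J. d (fst (fst q)) * d (snd (fst q)) = d (fst (snd q)) * d (snd (snd q))}"
    unfolding coll_def
    using card_bij[OF bij_betw_map_prod[OF bij_divmod[of N N] bij_divmod[of N N]],
      where P = "\<lambda>q. d (fst (fst q)) * d (snd (fst q)) = d (fst (snd q)) * d (snd (snd q))"]
    by simp
  also have "\<dots> = card {q\<in>?J\<times>?J. r (fst q) = r (snd q)}"
  proof -
    define \<sigma> where "\<sigma> q = ((fst (fst q), fst (snd q)), (snd (snd q), snd (fst q)))" for q :: "(nat \<times> nat) \<times> (nat \<times> nat)"
    have bij: "bij_betw \<sigma> (?J\<times>?J) (?J\<times>?J)"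
      by (rule bij_betw_byWitness[where f' = "\<lambda>q. ((fst (fst q), snd (snd q)), (snd (fst q), fst (snd q)))"])
        (auto simp: \<sigma>_def)
    have "{q\<in>?J\<times>?J. d (fst (fst q)) * d (snd (fst q)) = d (fst (snd q)) * d (snd (snd q))}
       = {q\<in>?J\<times>?J. r (fst (\<sigma> q)) = r (snd (\<sigma> q))}"
      using nz by (auto simp: r_def \<sigma>_def field_simps)
    thus ?thesis using card_bij[OF bij, where P = "\<lambda>q. r (fst q) = r (snd q)"] by simp
  qed
  also have "real \<dots> \<le> real (card {x\<in>?J. r x = 1}) ^ 2 + (real (card ?J) - real (card {x\<in>?J. r x = 1})) *
      min (real (coll N d)) (real (card ?J) - real (card {x\<in>?J. r x = 1}))"
  proof (rule mode_bound)
    fix v :: complex assume v: "v \<noteq> 1"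
    show "card {x\<in>?J. r x = v} \<le> coll N d"
    proof (cases "v = 0")
      case True
      hence "{x\<in>?J. r x = v} = {}" using nz by (auto simp: r_def)
      thus ?thesis by (metis card.empty zero_le)
    next
      case False
      have "{x\<in>?J. r x = v} = {p\<in>?J. d (fst p) = v * d (snd p)}"
        using nz by (auto simp: r_def field_simps)
      also have "card \<dots> \<le> coll N d" unfolding coll_def
        by (rule CS_count) (use False in \<open>auto intro: injI\<close>)
      finally show ?thesis .
    qed
  qed simp
  also have "card {x\<in>?J. r x = 1} = coll N d"
    unfolding coll_def using nz by (intro arg_cong[where f = card]) (auto simp: r_def)
  finally show ?thesis by simp
qed

lemma base_coll:
  shows "real (coll N d) \<le>
     real (ones N d) ^ 2 + (real N - real (ones N d)) * (real N - real (ones N d))"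
proof -
  have "real (coll N d) \<le> real (ones N d) ^ 2 + (real (card {..<N}) - real (ones N d)) *
      min (real N) (real (card {..<N}) - real (ones N d))"
    unfolding coll_def ones_def
  proof (rule mode_bound)
    fix v :: complex
    show "card {x\<in>{..<N}. d x = v} \<le> N" using card_mono[of "{..<N}" "{x\<in>{..<N}. d x = v}"] by auto
  qed simp
  moreover have "ones N d \<le> N" unfolding ones_def using card_mono[of "{..<N}" "{x\<in>{..<N}. d x = 1}"] by auto
  ultimately show ?thesis by (simp add: min_def split: if_splits)
qed



lemma fmap_alt: "fmap x = 1/2 + 2 * (x - 1/2)^2"
  by (simp add: fmap_def power2_eq_square algebra_simps)

lemma fmap_bounds: assumes "1/2 \<le> x" "x \<le> 1" shows "1/2 \<le> fmap x \<and> fmap x \<le> 1"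
proof -
  have "(x - 1/2)^2 \<le> (1/2)^2" by (rule power_mono) (use assms in auto)
  hence "(x - 1/2)^2 \<le> 1/4" by (simp add: power2_eq_square)
  moreover have "(x - 1/2)^2 \<ge> 0" by simp
  ultimately show ?thesis unfolding fmap_alt by linarith
qed

lemma fmap_strict: assumes "1/2 \<le> x" "x < y" shows "fmap x < fmap y"
proof -
  have "(x - 1/2)^2 < (y - 1/2)^2" by (rule power_strict_mono) (use assms in auto)
  thus ?thesis unfolding fmap_alt by simp
qed

lemma fmap_iter_bounds: "1/2 \<le> x \<Longrightarrow> x \<le> 1 \<Longrightarrow> 1/2 \<le> (fmap^^k) x \<and> (fmap^^k) x \<le> 1"
proof (induct k)
  case (Suc k)
  thus ?case using fmap_bounds[of "(fmap^^k) x"] by simp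
qed simp

lemma fmap_iter_strict: "1/2 \<le> x \<Longrightarrow> x < y \<Longrightarrow> y \<le> 1 \<Longrightarrow> (fmap^^k) x < (fmap^^k) y"
proof (induct k)
  case (Suc k)
  have "1/2 \<le> (fmap^^k) x" using fmap_iter_bounds[of x k] Suc by auto
  with Suc show ?case by (auto intro: fmap_strict)
qed simp

definition gg :: "real \<Rightarrow> real" where "gg s = s^2 + (1 - s) * min s (1 - s)"

lemma gg_fmap: "1/2 \<le> t \<Longrightarrow> gg t = fmap t"
  unfolding gg_def fmap_def by (auto simp: min_def power2_eq_square)

lemma gg_mono: assumes "0 \<le> s" "s \<le> t" "t \<le> 1" shows "gg s \<le> gg t"
proof (cases "s \<le> 1/2")
  case True
  hence gs: "gg s = s" unfolding gg_def by (auto simp: min_def power2_eq_square algebra_simps)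
  show ?thesis
  proof (cases "t \<le> 1/2")
    case True
    hence "gg t = t" unfolding gg_def by (auto simp: min_def power2_eq_square algebra_simps)
    thus ?thesis using gs assms by simp
  next
    case False
    hence "gg t = fmap t" by (intro gg_fmap) auto
    moreover have "1/2 \<le> fmap t" using fmap_bounds[of t] False assms by auto
    ultimately show ?thesis using gs True by simp
  qed
next
  case False
  hence "gg s = fmap s" "gg t = fmap t" using assms by (auto intro!: gg_fmap)
  moreover have "fmap s \<le> fmap t" using fmap_strict[of s t] False assms by (cases "s = t") auto
  ultimately show ?thesis by simp
qed

lemma gg_scale:
  assumes M: "M > 0" and c: "c \<le> gg0" and gg0: "gg0 = u^2 + (M - u) * min u (M - u)"
  shows "c / M^2 \<le> gg (u / M)"
proof -
  have "min (u/M) (1 - u/M) = min u (M - u) / M"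
    using M by (auto simp: min_def field_simps)
  hence "gg (u/M) = (u^2 + (M - u) * min u (M - u)) / M^2"
    unfolding gg_def using M by (simp add: field_simps power2_eq_square)
  thus ?thesis using c gg0 M by (simp add: divide_right_mono)
qed



lemma M1_upper:
  assumes "similar_mat B T" "T \<in> carrier_mat N N" "B \<in> carrier_mat N N" "upper_triangular T"
  shows "M1 B = real (ones N (\<lambda>i. T $$ (i,i))) / real N"
proof -
  have "char_poly B = char_poly T" by (rule char_poly_similar[OF assms(1)])
  also have "\<dots> = (\<Prod>a\<leftarrow>diag_mat T. [:-a, 1:])" by (rule char_poly_upper_triangular[OF assms(2,4)])
  finally have "Polynomial.order 1 (char_poly B) = length (filter ((=) 1) (diag_mat T))"
    by (simp add: order_linear_prod)
  also have "\<dots> = length (filter (\<lambda>i. 1 = T $$ (i,i)) [0..<N])"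
    using assms(2) by (simp add: diag_mat_def filter_map o_def)
  also have "\<dots> = ones N (\<lambda>i. T $$ (i,i))"
    unfolding length_filter_upt ones_def by (intro arg_cong[where f = card]) auto
  finally show ?thesis unfolding M1_def using assms(3) by simp
qed

lemma invertible_det: assumes "A \<in> carrier_mat n n" "invertible_mat (A :: 'a :: field mat)" shows "det A \<noteq> 0"
proof -
  from assms(2) obtain B where AB: "A * B = 1\<^sub>m (dim_row A)" and BA: "B * A = 1\<^sub>m (dim_row B)"
    unfolding invertible_mat_def inverts_mat_def by blast
  have "dim_col B = n" using AB assms(1) by (metis index_mult_mat(3) index_one_mat(3) carrier_matD(1))
  moreover have "dim_row B = n" using BA assms(1) by (metis index_mult_mat(3) index_one_mat(3) carrier_matD(2))
  ultimately have B: "B \<in> carrier_mat n n" by auto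
  from det_mult[OF assms(1) B] AB assms(1) have "det A * det B = 1" by simp
  thus ?thesis by auto
qed

theorem mainTheorem12:
  fixes A :: "complex mat" and n :: nat and c :: real
  assumes "A \<in> carrier_mat n n" and "invertible_mat A"
    and "1/2 < M1 A" and "M1 A < 1"
    and "M1 A < c" and "c < 1"
  shows "\<forall>m\<ge>1. M1 (kron_iter A (m - 1)) < (fmap ^^ (m - 1)) c"
proof -
  note A = assms(1)
  from char_poly_factorized[OF A] obtain es where cA: "char_poly A = (\<Prod>a\<leftarrow>es. [:- a, 1:])" by auto
  from schur_upper_triangular[OF A cA] obtain T where
    T: "T \<in> carrier_mat n n" "upper_triangular T" "similar_mat A T" by blast
  define NN where "NN k = n^(2^k)" for k
  have NNS: "NN (Suc k) = NN k * NN k" for k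
    unfolding NN_def by (simp add: power_add[symmetric] mult_2)
  define dg where "dg k i = kron_iter T k $$ (i,i)" for k i
  have props: "kron_iter T k \<in> carrier_mat (NN k) (NN k) \<and> upper_triangular (kron_iter T k)
     \<and> similar_mat (kron_iter A k) (kron_iter T k)" for k
  proof (induct k)
    case 0 then show ?case using T by (simp add: NN_def)
  next
    case (Suc k)
    hence c: "kron_iter T k \<in> carrier_mat (NN k) (NN k)" and u: "upper_triangular (kron_iter T k)"
      and s: "similar_mat (kron_iter A k) (kron_iter T k)" by auto
    have cA: "kron_iter A k \<in> carrier_mat (NN k) (NN k)" using kron_iter_carrier[OF A] unfolding NN_def by auto
    show ?case using kron_upper[OF u c] kron_similar[OF s cA c] c by (auto simp: NNS)
  qed
  have cAk: "kron_iter A k \<in> carrier_mat (NN k) (NN k)" for k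
    using kron_iter_carrier[OF A] unfolding NN_def by auto
  have M1k: "M1 (kron_iter A k) = real (ones (NN k) (dg k)) / real (NN k)" for k
    unfolding dg_def using props[of k] cAk[of k] by (intro M1_upper) auto
  have NNpos: "NN k > 0" for k
  proof -
    have "n \<noteq> 0"
    proof
      assume "n = 0"
      hence "M1 A = 0" unfolding M1_def using A by simp
      thus False using assms(3) by simp
    qed
    thus ?thesis unfolding NN_def by simp
  qed
  have dgS: "dg (Suc k) i = dg k (i div NN k) * dg k (i mod NN k)" if "i < NN k * NN k" for k i
  proof -
    have c: "dim_row (kron_iter T k) = NN k" "dim_col (kron_iter T k) = NN k" using props[of k] by auto
    have "dg (Suc k) i = kron_mat (kron_iter T k) (kron_iter T k) $$ (i,i)" unfolding dg_def by simp
    also have "\<dots> = dg k (i div NN k) * dg k (i mod NN k)"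
      unfolding dg_def using kron_index[where i=i and j=i and A="kron_iter T k" and B="kron_iter T k"] c that by simp
    finally show ?thesis .
  qed
  have ones_cong: "ones N d = ones N d'" if "\<And>i. i < N \<Longrightarrow> d i = d' i" for N d d'
    unfolding ones_def using that by (intro arg_cong[where f = card]) auto
  have coll_cong: "coll N d = coll N d'" if "\<And>i. i < N \<Longrightarrow> d i = d' i" for N d d'
    unfolding coll_def using that by (intro arg_cong[where f = card]) auto
  have onesS: "ones (NN (Suc k)) (dg (Suc k)) = ones (NN k * NN k) (\<lambda>i. dg k (i div NN k) * dg k (i mod NN k))" for k
    unfolding NNS by (rule ones_cong) (rule dgS)
  have collS: "coll (NN (Suc k)) (dg (Suc k)) = coll (NN k * NN k) (\<lambda>i. dg k (i div NN k) * dg k (i mod NN k))" for k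
    unfolding NNS by (rule coll_cong) (rule dgS)
  have nz: "dg k i \<noteq> 0" if "i < NN k" for k i
    using that
  proof (induct k arbitrary: i)
    case 0
    have "det T = det A" using det_similar[OF T(3)] by simp
    hence "det T \<noteq> 0" using invertible_det[OF A assms(2)] by simp
    hence "prod_list (diag_mat T) \<noteq> 0" using det_upper_triangular[OF T(2,1)] by simp
    moreover have "T $$ (i,i) \<in> set (diag_mat T)" using 0 T(1) unfolding diag_mat_def NN_def by auto
    ultimately show ?case unfolding dg_def by (auto simp: prod_list_zero_iff)
  next
    case (Suc k)
    have "i div NN k < NN k" "i mod NN k < NN k" using Suc(2) NNpos[of k]
      by (auto simp: NNS less_mult_imp_div_less)
    thus ?case using Suc dgS[of i k] by (simp add: NNS)
  qed
  define p where "p = M1 A"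
  have p0: "p = real (ones (NN 0) (dg 0)) / real (NN 0)" using M1k[of 0] unfolding p_def by simp
  have p: "1/2 < p" "p < 1" "p < c" using assms unfolding p_def by auto
  define s where "s k = real (coll (NN k) (dg k)) / real (NN k) ^ 2" for k
  have s_bound: "0 \<le> s k \<and> s k \<le> (fmap^^(Suc k)) p" for k
  proof (induct k)
    case 0
    define u where "u = real (ones (NN 0) (dg 0))"
    define N where "N = real (NN 0)"
    have N: "N > 0" using NNpos unfolding N_def by simp
    have "real (coll (NN 0) (dg 0)) \<le> u ^ 2 + (N - u) * (N - u)"
      using base_coll[of "NN 0" "dg 0"] unfolding u_def N_def by simp
    hence "s 0 \<le> (u ^ 2 + (N - u) * (N - u)) / N^2"
      unfolding s_def N_def[symmetric] using N by (simp add: divide_right_mono)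
    also have "\<dots> = fmap p" unfolding p0 u_def[symmetric] N_def[symmetric] fmap_def
      using N by (simp add: field_simps power2_eq_square)
    finally show ?case unfolding s_def by simp
  next
    case (Suc k)
    define u where "u = real (coll (NN k) (dg k))"
    define M where "M = real (NN k * NN k)"
    have M: "M > 0" using NNpos[of k] unfolding M_def by simp
    have c: "real (coll (NN k * NN k) (\<lambda>i. dg k (i div NN k) * dg k (i mod NN k))) \<le> u^2 + (M - u) * min u (M - u)"
      using kron_coll[of "NN k" "dg k", OF nz] unfolding u_def M_def by simp
    have "s (Suc k) = real (coll (NN k * NN k) (\<lambda>i. dg k (i div NN k) * dg k (i mod NN k))) / M^2"
      unfolding s_def collS M_def by (simp add: NNS)
    also have "\<dots> \<le> gg (u / M)" by (rule gg_scale[OF M c refl])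
    also have "u / M = s k" unfolding s_def u_def M_def by (simp add: power2_eq_square)
    also have "gg (s k) \<le> gg ((fmap^^(Suc k)) p)"
      using Suc fmap_iter_bounds[of p "Suc k"] p by (intro gg_mono) auto
    also have "\<dots> = (fmap^^(Suc (Suc k))) p"
      using fmap_iter_bounds[of p "Suc k"] p by (simp add: gg_fmap)
    finally show ?case unfolding s_def by simp
  qed
  have M1S: "M1 (kron_iter A (Suc k)) \<le> s k" for k
  proof -
    have "M1 (kron_iter A (Suc k)) = real (ones (NN k * NN k) (\<lambda>i. dg k (i div NN k) * dg k (i mod NN k))) / real (NN k * NN k)"
      unfolding M1k onesS by (simp add: NNS)
    also have "\<dots> \<le> real (coll (NN k) (dg k)) / real (NN k * NN k)"
      using kron_ones[of "NN k" "dg k", OF nz] NNpos[of k] by (simp add: divide_right_mono)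
    also have "\<dots> = s k" unfolding s_def by (simp add: power2_eq_square)
    finally show ?thesis .
  qed
  show ?thesis
  proof (intro allI impI)
    fix m :: nat assume "1 \<le> m"
    show "M1 (kron_iter A (m - 1)) < (fmap ^^ (m - 1)) c"
    proof (cases "m - 1")
      case 0 thus ?thesis using p unfolding p_def by simp
    next
      case (Suc k)
      have "M1 (kron_iter A (Suc k)) \<le> (fmap^^(Suc k)) p" using M1S[of k] s_bound[of k] by linarith
      also have "\<dots> < (fmap^^(Suc k)) c" using p assms(6) by (intro fmap_iter_strict) auto
      finally show ?thesis using Suc by simp
    qed
  qed
qed

end
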